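(* On $\mathcal H$, the operator $H_{\rm string}$ is positive semidefinite, its nullspace is exactly $S_{\rm string}$, and its smallest nonzero eigenvalue is $2$; more precisely, each particle-position basis configuration (one occupied edge per line) whose occupied edges form $L$ connected components is an eigenvector of $H_{\rm string}$ with eigenvalue $2L-2$. Moreover $H_{\rm string}$ commutes with every $n_{e,\alpha}$ and with every $H^p_{\rm prop}$, hence with $H(\lambda)$ for all $\lambda\in[0,1]$.
   Context: Grid. Fix $n\ge1$. Vertices are $(i,j)$ with $i,j\in\{0,\dots,n\}$; $(0,0)$ is the top and $(n,n)$ the bottom vertex. For a vertex $(i,j)$ and $x\in\{0,1\}$, the edge $(i,j,x)$ joins $(i,j)$ (upper endpoint) to $(i+1-x,j+x)$ (lower endpoint), whenever the latter is a vertex. It lies on line $w=i+j+1$ and has horizontal coordinate $t=n+j-i+x$. $E_w$ is the set of edges on line $w$. $\mathcal H=\bigotimes_{w=1}^{2n}(\mathbb C^{E_w}\otimes\mathbb C^2)$ with basis $|e,\alpha\rangle_w$ (particle $w$ on edge $e$, qubit $\alpha$); $n_{e,\alpha}=|e,\alpha\rangle\langle e,\alpha|_w$, $N_e=n_{e,0}+n_{e,1}$. Strings: for $z\in\{0,1\}^{2n}$ of weight $n$, $v_0=(0,0)$, $v_s=(\#\{k\le s:z_k=0\},\#\{k\le s:z_k=1\})$, $e_s(z)=(i,j,z_s)$ with $(i,j)=v_{s-1}$; $|x\rangle|z\rangle=\bigotimes_w|e_w(z),x_w\rangle_w$; $S_{\rm string}=\mathrm{span}\{|x\rangle|z\rangle: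 x\in\{0,1\}^{2n},\mathrm{wt}(z)=n\}$. $H_{\rm string}=\sum_{v\notin\{(0,0),(n,n)\}}(N^{\rm up}_v+N^{\rm down}_v-2N^{\rm up}_vN^{\rm down}_v)$ where $N^{\rm up}_v$ (resp. $N^{\rm down}_v$) is the sum of $N_e$ over existing edges $e$ with lower (resp. upper) endpoint $v$. Plaquette $p=(i,j)$, $i,j\in\{0,\dots,n-1\}$: $w_p=i+j+1$, left edges $e_1=(i,j,0)$, $e_2=(i+1,j,1)$, right edges $e_3=(i,j,1)$, $e_4=(i,j+1,0)$, arbitrary two-qubit unitary $U_p$; $H^p_{\rm prop}=-\sum_{\alpha,\beta,\gamma,\delta}\langle\beta\delta|U_p|\alpha\gamma\rangle|e_3,\beta\rangle\langle e_1,\alpha|_{w_p}\otimes|e_4,\delta\rangle\langle e_2,\gamma|_{w_p+1}+\text{h.c.}$. $H(\lambda)=H_{\rm string}+\sum_p(N_{e_1}N_{e_2}+N_{e_3}N_{e_4}+\lambda H^p_{\rm prop})+\sqrt{1-\lambda^2}(N_{(0,0,1)}+N_{(n-1,n,0)})+\sum_w\sum_{e\in E_w,t(e)\le n}n_{e,1}$. *)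

theory Defs
  imports Complex_Main
begin

(* Edges (i,j,x): upper endpoint (i,j), lower endpoint (i+1-x, j+x); qubits are 0/1 (nat). *)
type_synonym edge = "nat \<times> nat \<times> nat"
type_synonym vertex = "nat \<times> nat"
(* a basis configuration: line w \<mapsto> (occupied edge, qubit value) *)
type_synonym conf = "nat \<Rightarrow> edge \<times> nat"
(* operators on H, given by their matrix entries in the particle-position/qubit basis *)
type_synonym kernel = "conf \<Rightarrow> conf \<Rightarrow> complex"

definition Vert :: "nat \<Rightarrow> vertex set" where
  "Vert n = {(i,j). i \<le> n \<and> j \<le> n}"

definition upper :: "edge \<Rightarrow> vertex" where
  "upper e = (case e of (i,j,x) \<Rightarrow> (i,j))"

definition lower :: "edge \<Rightarrow> vertex" where
  "lower e = (case e of (i,j,x) \<Rightarrow> (i+1-x, j+x))"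

definition line :: "edge \<Rightarrow> nat" where
  "line e = (case e of (i,j,x) \<Rightarrow> i+j+1)"

definition tcoord :: "nat \<Rightarrow> edge \<Rightarrow> nat" where
  "tcoord n e = (case e of (i,j,x) \<Rightarrow> n+j-i+x)"

definition Edges :: "nat \<Rightarrow> edge set" where
  "Edges n = {(i,j,x). x \<le> 1 \<and> (i,j) \<in> Vert n \<and> (i+1-x, j+x) \<in> Vert n}"

definition Elin :: "nat \<Rightarrow> nat \<Rightarrow> edge set" where
  "Elin n w = {e \<in> Edges n. line e = w}"

definition dflt :: "edge \<times> nat" where "dflt = ((0,0,0),0)"

(* basis of H: one particle on each line w in 1..2n, with a qubit; extensional outside *)
definition Conf :: "nat \<Rightarrow> conf set" where
  "Conf n = {c. \<forall>w. (w \<in> {1..2*n} \<longrightarrow> fst (c w) \<in> Elin n w \<and> snd (c w) \<le> 1)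
                   \<and> (w \<notin> {1..2*n} \<longrightarrow> c w = dflt)}"

definition Vec :: "nat \<Rightarrow> (conf \<Rightarrow> complex) set" where
  "Vec n = {\<psi>. \<forall>c. c \<notin> Conf n \<longrightarrow> \<psi> c = 0}"

definition ket :: "conf \<Rightarrow> conf \<Rightarrow> complex" where
  "ket s = (\<lambda>c. if c = s then 1 else 0)"

definition apply_op :: "nat \<Rightarrow> kernel \<Rightarrow> (conf \<Rightarrow> complex) \<Rightarrow> (conf \<Rightarrow> complex)" where
  "apply_op n A \<psi> = (\<lambda>c. if c \<in> Conf n then (\<Sum>c'\<in>Conf n. A c c' * \<psi> c') else 0)"

definition opmul :: "nat \<Rightarrow> kernel \<Rightarrow> kernel \<Rightarrow> kernel" where
  "opmul n A B = (\<lambda>c c''. \<Sum>c'\<in>Conf n. A c c' * B c' c'')"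

definition commute :: "nat \<Rightarrow> kernel \<Rightarrow> kernel \<Rightarrow> bool" where
  "commute n A B \<longleftrightarrow> (\<forall>c\<in>Conf n. \<forall>c'\<in>Conf n. opmul n A B c c' = opmul n B A c c')"

definition hermitian :: "nat \<Rightarrow> kernel \<Rightarrow> bool" where
  "hermitian n A \<longleftrightarrow> (\<forall>c\<in>Conf n. \<forall>c'\<in>Conf n. A c c' = cnj (A c' c))"

definition psd :: "nat \<Rightarrow> kernel \<Rightarrow> bool" where
  "psd n A \<longleftrightarrow> hermitian n A \<and>
     (\<forall>\<psi>\<in>Vec n. let q = (\<Sum>c\<in>Conf n. cnj (\<psi> c) * apply_op n A \<psi> c) in Im q = 0 \<and> Re q \<ge> 0)"

definition is_eigenvalue :: "nat \<Rightarrow> kernel \<Rightarrow> complex \<Rightarrow> bool" where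
  "is_eigenvalue n A \<mu> \<longleftrightarrow> (\<exists>\<psi>\<in>Vec n. \<psi> \<noteq> (\<lambda>_. 0) \<and> apply_op n A \<psi> = (\<lambda>c. \<mu> * \<psi> c))"

definition nop :: "edge \<Rightarrow> nat \<Rightarrow> kernel" where
  "nop e \<alpha> = (\<lambda>c c'. if c = c' \<and> c (line e) = (e, \<alpha>) then 1 else 0)"

definition Nop :: "edge \<Rightarrow> kernel" where
  "Nop e = (\<lambda>c c'. nop e 0 c c' + nop e 1 c c')"

definition Nup :: "nat \<Rightarrow> vertex \<Rightarrow> kernel" where
  "Nup n v = (\<lambda>c c'. \<Sum>e\<in>{e\<in>Edges n. lower e = v}. Nop e c c')"

definition Ndown :: "nat \<Rightarrow> vertex \<Rightarrow> kernel" where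
  "Ndown n v = (\<lambda>c c'. \<Sum>e\<in>{e\<in>Edges n. upper e = v}. Nop e c c')"

definition Hstring :: "nat \<Rightarrow> kernel" where
  "Hstring n = (\<lambda>c c'. \<Sum>v\<in>Vert n - {(0,0),(n,n)}.
      Nup n v c c' + Ndown n v c c' - 2 * opmul n (Nup n v) (Ndown n v) c c')"

definition strvtx :: "(nat \<Rightarrow> nat) \<Rightarrow> nat \<Rightarrow> vertex" where
  "strvtx z s = (card {k\<in>{1..s}. z k = 0}, card {k\<in>{1..s}. z k = 1})"

definition stredge :: "(nat \<Rightarrow> nat) \<Rightarrow> nat \<Rightarrow> edge" where
  "stredge z s = (fst (strvtx z (s-1)), snd (strvtx z (s-1)), z s)"

definition strconf :: "nat \<Rightarrow> (nat \<Rightarrow> nat) \<Rightarrow> (nat \<Rightarrow> nat) \<Rightarrow> conf" where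
  "strconf n x z = (\<lambda>w. if w \<in> {1..2*n} then (stredge z w, x w) else dflt)"

definition StrConf :: "nat \<Rightarrow> conf set" where
  "StrConf n = {strconf n x z | x z. (\<forall>k\<in>{1..2*n}. x k \<le> 1 \<and> z k \<le> 1)
                                   \<and> card {k\<in>{1..2*n}. z k = 1} = n}"

definition Sstring :: "nat \<Rightarrow> (conf \<Rightarrow> complex) set" where
  "Sstring n = {\<psi>. \<exists>a. \<psi> = (\<lambda>c. \<Sum>s\<in>StrConf n. a s * ket s c)}"

definition Occ :: "nat \<Rightarrow> conf \<Rightarrow> edge set" where
  "Occ n c = {fst (c w) | w. w \<in> {1..2*n}}"

definition share :: "edge \<Rightarrow> edge \<Rightarrow> bool" where
  "share e f \<longleftrightarrow> {upper e, lower e} \<inter> {upper f, lower f} \<noteq> {}"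

definition ncomp :: "nat \<Rightarrow> conf \<Rightarrow> nat" where
  "ncomp n c = card (Occ n c // ({(e,f). e \<in> Occ n c \<and> f \<in> Occ n c \<and> share e f}\<^sup>*))"

definition Plaq :: "nat \<Rightarrow> vertex set" where
  "Plaq n = {(i,j). i < n \<and> j < n}"

definition pe1 :: "vertex \<Rightarrow> edge" where "pe1 p = (fst p, snd p, 0)"
definition pe2 :: "vertex \<Rightarrow> edge" where "pe2 p = (fst p + 1, snd p, 1)"
definition pe3 :: "vertex \<Rightarrow> edge" where "pe3 p = (fst p, snd p, 1)"
definition pe4 :: "vertex \<Rightarrow> edge" where "pe4 p = (fst p, snd p + 1, 0)"

(* two-qubit operator: U (beta,delta) (alpha,gamma) = <beta delta|U|alpha gamma> *)
type_synonym qop = "nat \<times> nat \<Rightarrow> nat \<times> nat \<Rightarrow> complex"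

definition unitary2 :: "qop \<Rightarrow> bool" where
  "unitary2 U \<longleftrightarrow> (\<forall>a\<in>{0,1}\<times>{0,1}. \<forall>b\<in>{0,1}\<times>{0,1}.
      (\<Sum>k\<in>{0,1}\<times>{0,1}. cnj (U k a) * U k b) = (if a = b then 1 else 0))
    \<and> (\<forall>a\<in>{0,1}\<times>{0,1}. \<forall>b\<in>{0,1}\<times>{0,1}.
      (\<Sum>k\<in>{0,1}\<times>{0,1}. U a k * cnj (U b k)) = (if a = b then 1 else 0))"

(* |e3,beta><e1,alpha|_w (x) |e4,delta><e2,gamma|_{w+1} (x) identity on the other lines *)
definition hop :: "vertex \<Rightarrow> nat \<Rightarrow> nat \<Rightarrow> nat \<Rightarrow> nat \<Rightarrow> kernel" where
  "hop p \<alpha> \<beta> \<gamma> \<delta> = (\<lambda>c c'. let w = fst p + snd p + 1 in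
     if c' w = (pe1 p, \<alpha>) \<and> c' (w+1) = (pe2 p, \<gamma>) \<and> c w = (pe3 p, \<beta>) \<and> c (w+1) = (pe4 p, \<delta>)
        \<and> (\<forall>v. v \<noteq> w \<and> v \<noteq> w+1 \<longrightarrow> c v = c' v) then 1 else 0)"

definition Aprop :: "qop \<Rightarrow> vertex \<Rightarrow> kernel" where
  "Aprop U p = (\<lambda>c c'. - (\<Sum>\<alpha>\<in>{0,1}. \<Sum>\<beta>\<in>{0,1}. \<Sum>\<gamma>\<in>{0,1}. \<Sum>\<delta>\<in>{0::nat,1}.
      U (\<beta>,\<delta>) (\<alpha>,\<gamma>) * hop p \<alpha> \<beta> \<gamma> \<delta> c c'))"

definition Hprop :: "qop \<Rightarrow> vertex \<Rightarrow> kernel" where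
  "Hprop U p = (\<lambda>c c'. Aprop U p c c' + cnj (Aprop U p c' c))"

definition Htot :: "nat \<Rightarrow> (vertex \<Rightarrow> qop) \<Rightarrow> real \<Rightarrow> kernel" where
  "Htot n Us lam = (\<lambda>c c'. Hstring n c c'
     + (\<Sum>p\<in>Plaq n. opmul n (Nop (pe1 p)) (Nop (pe2 p)) c c' + opmul n (Nop (pe3 p)) (Nop (pe4 p)) c c'
                      + complex_of_real lam * Hprop (Us p) p c c')
     + complex_of_real (sqrt (1 - lam\<^sup>2)) * (Nop (0,0,1) c c' + Nop (n-1,n,0) c c')
     + (\<Sum>w\<in>{1..2*n}. \<Sum>e\<in>{e\<in>Elin n w. tcoord n e \<le> n}. nop e 1 c c'))"

end

theory Submission imports Defs "HOL-Library.FuncSet" begin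

definition dg :: "vertex \<Rightarrow> nat" where "dg v = fst v + snd v"
definition lnk :: "conf \<Rightarrow> nat \<Rightarrow> bool" where
  "lnk c k \<longleftrightarrow> lower (fst (c k)) = upper (fst (c (Suc k)))"
definition brk :: "nat \<Rightarrow> conf \<Rightarrow> nat set" where
  "brk n c = {k\<in>{1..2*n-1}. \<not> lnk c k}"

lemma edge_facts:
  assumes "e \<in> Edges n"
  shows "dg (lower e) = line e \<and> Suc (dg (upper e)) = line e \<and> 1 \<le> line e \<and> line e \<le> 2*n
     \<and> upper e \<in> Vert n \<and> lower e \<in> Vert n"
proof -
  obtain i j x where e: "e = (i,j,x)" by (cases e) auto
  show ?thesis using assms unfolding e Edges_def Vert_def dg_def lower_def upper_def line_def
    by auto
qed

lemma conf_facts: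
  assumes "c \<in> Conf n" "w \<in> {1..2*n}"
  shows "fst (c w) \<in> Edges n \<and> line (fst (c w)) = w \<and> snd (c w) \<le> 1"
  using assms unfolding Conf_def Elin_def by auto

lemma conf_out: "c \<in> Conf n \<Longrightarrow> w \<notin> {1..2*n} \<Longrightarrow> c w = dflt"
  unfolding Conf_def by auto

lemma finite_Edges: "finite (Edges n)"
proof -
  have "Edges n \<subseteq> {..n} \<times> {..n} \<times> {..1::nat}"
    unfolding Edges_def Vert_def by auto
  then show ?thesis by (rule finite_subset) auto
qed

lemma finite_Conf: "finite (Conf n)"
proof -
  let ?g = "\<lambda>f::nat \<Rightarrow> edge \<times> nat. \<lambda>w. if w \<in> {1..2*n} then f w else dflt"
  have "Conf n \<subseteq> ?g ` (PiE {1..2*n} (\<lambda>_. Edges n \<times> {..1}))"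
  proof
    fix c assume c: "c \<in> Conf n"
    have "c = ?g (restrict c {1..2*n})"
      using conf_out[OF c] by (auto simp: restrict_def)
    moreover have "restrict c {1..2*n} \<in> PiE {1..2*n} (\<lambda>_. Edges n \<times> {..1})"
      using conf_facts[OF c] by (auto simp: mem_Times_iff)
    ultimately show "c \<in> ?g ` (PiE {1..2*n} (\<lambda>_. Edges n \<times> {..1}))" by blast
  qed
  moreover have "finite (PiE {1..2*n} (\<lambda>_. Edges n \<times> {..1::nat}))"
    by (intro finite_PiE) (auto simp: finite_Edges)
  ultimately show ?thesis by (meson finite_imageI finite_subset)
qed

lemma nop_off: "c \<noteq> c' \<Longrightarrow> nop e a c c' = 0" by (simp add: nop_def)
lemma Nop_off: "c \<noteq> c' \<Longrightarrow> Nop e c c' = 0" by (simp add: Nop_def nop_def)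
lemma Nup_off: "c \<noteq> c' \<Longrightarrow> Nup n v c c' = 0" by (simp add: Nup_def Nop_off)
lemma Ndown_off: "c \<noteq> c' \<Longrightarrow> Ndown n v c c' = 0" by (simp add: Ndown_def Nop_off)

lemma opmul_off:
  assumes "\<And>x y. x \<noteq> y \<Longrightarrow> A x y = 0" "\<And>x y. x \<noteq> y \<Longrightarrow> B x y = 0" "c \<noteq> c'"
  shows "opmul n A B c c' = 0"
  unfolding opmul_def
proof (rule sum.neutral, intro ballI)
  fix x show "A c x * B x c' = 0" using assms by (cases "x = c") auto
qed

lemma opmul_diag:
  assumes "\<And>x y. x \<noteq> y \<Longrightarrow> A x y = 0" "c \<in> Conf n"
  shows "opmul n A B c c' = A c c * B c c'"
proof -
  have "opmul n A B c c' = (\<Sum>x\<in>Conf n. if x = c then A c c * B c c' else 0)"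
    unfolding opmul_def by (rule sum.cong) (auto simp: assms(1))
  also have "\<dots> = A c c * B c c'" using assms(2) finite_Conf by (simp add: sum.delta')
  finally show ?thesis .
qed

lemma opmul_diag2:
  assumes "\<And>x y. x \<noteq> y \<Longrightarrow> B x y = 0" "c' \<in> Conf n"
  shows "opmul n A B c c' = A c c' * B c' c'"
proof -
  have "opmul n A B c c' = (\<Sum>x\<in>Conf n. if x = c' then A c c' * B c' c' else 0)"
    unfolding opmul_def by (rule sum.cong) (auto simp: assms(1))
  also have "\<dots> = A c c' * B c' c'" using assms(2) finite_Conf by (simp add: sum.delta')
  finally show ?thesis .
qed

lemma Hstring_off: "c \<noteq> c' \<Longrightarrow> Hstring n c c' = 0"
  unfolding Hstring_def by (simp add: Nup_off Ndown_off opmul_off)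

lemma Nop_diag:
  assumes c: "c \<in> Conf n" and e: "e \<in> Edges n"
  shows "Nop e c c = (if fst (c (line e)) = e then 1 else 0)"
proof -
  have "line e \<in> {1..2*n}" using edge_facts[OF e] by auto
  then have "snd (c (line e)) \<le> 1" using conf_facts[OF c] by blast
  then show ?thesis unfolding Nop_def nop_def
    by (cases "c (line e)") auto
qed

lemma Nup_diag:
  assumes c: "c \<in> Conf n" and v: "1 \<le> dg v" "dg v \<le> 2*n"
  shows "Nup n v c c = (if lower (fst (c (dg v))) = v then 1 else 0)"
proof -
  let ?e = "fst (c (dg v))"
  have ce: "?e \<in> Edges n" "line ?e = dg v" using conf_facts[OF c, of "dg v"] v by auto
  have "Nup n v c c = (\<Sum>e\<in>{e\<in>Edges n. lower e = v}. if e = ?e then 1 else 0)"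
    unfolding Nup_def
  proof (rule sum.cong)
    fix e assume "e \<in> {e\<in>Edges n. lower e = v}"
    then have "e \<in> Edges n" "lower e = v" by auto
    then have "line e = dg v" using edge_facts by metis
    then show "Nop e c c = (if e = ?e then 1 else 0)"
      using Nop_diag[OF c \<open>e \<in> Edges n\<close>] by auto
  qed simp
  also have "\<dots> = (if lower ?e = v then 1 else 0)"
    using finite_Edges ce by (simp add: sum.delta')
  finally show ?thesis .
qed

lemma Ndown_diag:
  assumes c: "c \<in> Conf n" and v: "dg v < 2*n"
  shows "Ndown n v c c = (if upper (fst (c (Suc (dg v)))) = v then 1 else 0)"
proof -
  let ?e = "fst (c (Suc (dg v)))"
  have ce: "?e \<in> Edges n" "line ?e = Suc (dg v)" using conf_facts[OF c, of "Suc (dg v)"] v by auto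
  have "Ndown n v c c = (\<Sum>e\<in>{e\<in>Edges n. upper e = v}. if e = ?e then 1 else 0)"
    unfolding Ndown_def
  proof (rule sum.cong)
    fix e assume "e \<in> {e\<in>Edges n. upper e = v}"
    then have "e \<in> Edges n" "upper e = v" by auto
    then have "line e = Suc (dg v)" using edge_facts by metis
    then show "Nop e c c = (if e = ?e then 1 else 0)"
      using Nop_diag[OF c \<open>e \<in> Edges n\<close>] by auto
  qed simp
  also have "\<dots> = (if upper ?e = v then 1 else 0)"
    using finite_Edges ce by (simp add: sum.delta')
  finally show ?thesis .
qed


lemma Vert_dg: "v \<in> Vert n - {(0,0),(n,n)} \<Longrightarrow> 1 \<le> dg v \<and> dg v \<le> 2*n - 1"
  unfolding Vert_def dg_def by auto

lemma brk_vert: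
  assumes c: "c \<in> Conf n" and k: "k \<in> {1..2*n-1}"
  shows "lower (fst (c k)) \<in> Vert n - {(0,0),(n,n)} \<and> dg (lower (fst (c k))) = k
       \<and> upper (fst (c (Suc k))) \<in> Vert n - {(0,0),(n,n)} \<and> dg (upper (fst (c (Suc k)))) = k"
proof -
  have a: "fst (c k) \<in> Edges n" "line (fst (c k)) = k" using conf_facts[OF c, of k] k by auto
  have b: "fst (c (Suc k)) \<in> Edges n" "line (fst (c (Suc k))) = Suc k"
    using conf_facts[OF c, of "Suc k"] k by auto
  have "dg (0,0) = 0" "dg (n,n) = 2*n" by (auto simp: dg_def)
  then show ?thesis using edge_facts[OF a(1)] edge_facts[OF b(1)] a(2) b(2) k by auto
qed

lemma card_S:
  assumes c: "c \<in> Conf n"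
  shows "card {v\<in>Vert n - {(0,0),(n,n)}. (lower (fst (c (dg v))) = v) \<noteq> (upper (fst (c (Suc (dg v)))) = v)}
     = 2 * card (brk n c)"
proof -
  let ?f1 = "\<lambda>k. lower (fst (c k))" and ?f2 = "\<lambda>k. upper (fst (c (Suc k)))"
  let ?S = "{v\<in>Vert n - {(0,0),(n,n)}. (lower (fst (c (dg v))) = v) \<noteq> (upper (fst (c (Suc (dg v)))) = v)}"
  have bk: "\<And>k. k \<in> brk n c \<Longrightarrow> k \<in> {1..2*n-1}" by (auto simp: brk_def)
  have S: "?S = ?f1 ` brk n c \<union> ?f2 ` brk n c"
  proof (intro equalityI subsetI)
    fix v assume v: "v \<in> ?S"
    let ?k = "dg v"
    have vV: "v \<in> Vert n - {(0,0),(n,n)}" using v by blast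
    have k: "?k \<in> {1..2*n-1}" using Vert_dg[OF vV] by auto
    show "v \<in> ?f1 ` brk n c \<union> ?f2 ` brk n c"
    proof (cases "lower (fst (c ?k)) = v")
      case True
      then have "?k \<in> brk n c" using v k by (auto simp: brk_def lnk_def)
      then show ?thesis using True by (metis UnI1 image_eqI)
    next
      case False
      then have "upper (fst (c (Suc ?k))) = v" using v by auto
      then have "?k \<in> brk n c" using False k by (auto simp: brk_def lnk_def)
      then show ?thesis using \<open>upper (fst (c (Suc ?k))) = v\<close> by (metis UnI2 image_eqI)
    qed
  next
    fix v assume "v \<in> ?f1 ` brk n c \<union> ?f2 ` brk n c"
    then obtain k where k: "k \<in> brk n c" and "v = ?f1 k \<or> v = ?f2 k" by blast
    then show "v \<in> ?S" using brk_vert[OF c bk[OF k]] k by (auto simp: brk_def lnk_def)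
  qed
  have i1: "inj_on ?f1 (brk n c)"
    by (rule inj_onI) (metis brk_vert[OF c] bk)
  have i2: "inj_on ?f2 (brk n c)"
    by (rule inj_onI) (metis brk_vert[OF c] bk)
  have dj: "?f1 ` brk n c \<inter> ?f2 ` brk n c = {}"
  proof (rule ccontr)
    assume "?f1 ` brk n c \<inter> ?f2 ` brk n c \<noteq> {}"
    then obtain v where "v \<in> ?f1 ` brk n c" "v \<in> ?f2 ` brk n c" by blast
    then obtain k k' where k: "k \<in> brk n c" "k' \<in> brk n c" and eq: "?f1 k = ?f2 k'"
      by (elim imageE) simp
    then have "k = k'" using brk_vert[OF c bk[OF k(1)]] brk_vert[OF c bk[OF k(2)]] by metis
    then show False using k eq by (auto simp: brk_def lnk_def)
  qed
  have fin: "finite (brk n c)" by (auto simp: brk_def)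
  show ?thesis unfolding S using card_Un_disjoint[OF _ _ dj] fin card_image[OF i1] card_image[OF i2]
    by simp
qed

lemma sum_ind: "finite A \<Longrightarrow> (\<Sum>v\<in>A. if P v then 1 else 0) = (of_nat (card {v\<in>A. P v}) :: 'a::semiring_1)"
  by (simp add: sum.inter_filter[symmetric])

lemma finite_Vert: "finite (Vert n)"
proof -
  have "Vert n \<subseteq> {..n} \<times> {..n}" unfolding Vert_def by auto
  then show ?thesis by (rule finite_subset) auto
qed

lemma Hstring_diag:
  assumes c: "c \<in> Conf n"
  shows "Hstring n c c = of_nat (2 * card (brk n c))"
proof -
  let ?V = "Vert n - {(0,0),(n,n)}"
  have "Hstring n c c = (\<Sum>v\<in>?V. if (lower (fst (c (dg v))) = v) \<noteq> (upper (fst (c (Suc (dg v)))) = v) then 1 else 0)"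
    unfolding Hstring_def
  proof (rule sum.cong)
    fix v assume v: "v \<in> ?V"
    have "opmul n (Nup n v) (Ndown n v) c c = Nup n v c c * Ndown n v c c"
      by (rule opmul_diag[OF _ c]) (simp add: Nup_off)
    then show "Nup n v c c + Ndown n v c c - 2 * opmul n (Nup n v) (Ndown n v) c c =
      (if (lower (fst (c (dg v))) = v) \<noteq> (upper (fst (c (Suc (dg v)))) = v) then 1 else 0)"
      using Nup_diag[OF c, of v] Ndown_diag[OF c, of v] Vert_dg[OF v] by auto
  qed simp
  also have "\<dots> = of_nat (card {v\<in>?V. (lower (fst (c (dg v))) = v) \<noteq> (upper (fst (c (Suc (dg v)))) = v)})"
    by (rule sum_ind) (simp add: finite_Vert)
  finally show ?thesis using card_S[OF c] by simp
qed


definition qq :: "conf \<Rightarrow> nat \<Rightarrow> nat \<Rightarrow> bool" where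
  "qq c w w' \<longleftrightarrow> (\<forall>k. min w w' \<le> k \<and> k < max w w' \<longrightarrow> lnk c k)"

definition rel :: "nat \<Rightarrow> conf \<Rightarrow> (edge \<times> edge) set" where
  "rel n c = {(e,f). e \<in> Occ n c \<and> f \<in> Occ n c \<and> share e f}"

lemma qq_trans: "qq c a b \<Longrightarrow> qq c b d \<Longrightarrow> qq c a d"
  unfolding qq_def
proof (intro allI impI)
  fix k assume h1: "\<forall>k. min a b \<le> k \<and> k < max a b \<longrightarrow> lnk c k"
    and h2: "\<forall>k. min b d \<le> k \<and> k < max b d \<longrightarrow> lnk c k"
    and k: "min a d \<le> k \<and> k < max a d"
  have "(min a b \<le> k \<and> k < max a b) \<or> (min b d \<le> k \<and> k < max b d)" using k by linarith
  then show "lnk c k" using h1 h2 by blast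
qed

lemma qq_sym: "qq c a b = qq c b a" unfolding qq_def by (simp add: min.commute max.commute)

lemma qq_refl: "qq c a a" unfolding qq_def by auto

lemma qq_step: "qq c a (Suc a) = lnk c a" unfolding qq_def
  by (auto simp: less_Suc_eq_le dest: le_antisym)

lemma Occ_iff: "c \<in> Conf n \<Longrightarrow> x \<in> Occ n c \<longleftrightarrow> (\<exists>w\<in>{1..2*n}. x = fst (c w))"
  unfolding Occ_def by auto

lemma share_iff:
  assumes c: "c \<in> Conf n" and w: "w \<in> {1..2*n}" "w' \<in> {1..2*n}" and lt: "w < w'"
  shows "share (fst (c w)) (fst (c w')) \<longleftrightarrow> (w' = Suc w \<and> lnk c w)"
proof -
  let ?e = "fst (c w)" and ?f = "fst (c w')"
  have e: "dg (lower ?e) = w" "Suc (dg (upper ?e)) = w"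
    using conf_facts[OF c w(1)] edge_facts by metis+
  have f: "dg (lower ?f) = w'" "Suc (dg (upper ?f)) = w'"
    using conf_facts[OF c w(2)] edge_facts by metis+
  have "share ?e ?f \<longleftrightarrow> upper ?e = upper ?f \<or> upper ?e = lower ?f \<or> lower ?e = upper ?f \<or> lower ?e = lower ?f"
    unfolding share_def by auto
  also have "\<dots> \<longleftrightarrow> lower ?e = upper ?f"
    using e f lt by (metis Suc_lessD less_irrefl_nat less_not_refl3)
  also have "\<dots> \<longleftrightarrow> (w' = Suc w \<and> lnk c w)"
    using e f lt unfolding lnk_def by (metis)
  finally show ?thesis .
qed

lemma share_sym: "share e f = share f e" unfolding share_def by auto

lemma rel_qq:
  assumes c: "c \<in> Conf n" and r: "(u, v) \<in> rel n c"
  shows "\<exists>w\<in>{1..2*n}. \<exists>w'\<in>{1..2*n}. u = fst (c w) \<and> v = fst (c w') \<and> qq c w w'"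
proof -
  from r obtain w w' where w: "w \<in> {1..2*n}" "w' \<in> {1..2*n}" "u = fst (c w)" "v = fst (c w')"
    and sh: "share u v"
    unfolding rel_def Occ_def by auto
  have "qq c w w'"
  proof (cases w w' rule: linorder_cases)
    case less
    then show ?thesis using share_iff[OF c w(1,2) less] sh w qq_step by auto
  next
    case equal then show ?thesis by (simp add: qq_refl)
  next
    case greater
    then have "share (fst (c w')) (fst (c w))" using sh w share_sym by auto
    then show ?thesis using share_iff[OF c w(2,1) greater] qq_step qq_sym by auto
  qed
  then show ?thesis using w by blast
qed

lemma line_E: "c \<in> Conf n \<Longrightarrow> w \<in> {1..2*n} \<Longrightarrow> line (fst (c w)) = w"
  using conf_facts by blast

lemma rel_fwd:
  assumes c: "c \<in> Conf n" and r: "(a, b) \<in> (rel n c)\<^sup>*" and a: "a \<in> Occ n c"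
  shows "b \<in> Occ n c \<and> qq c (line a) (line b)"
  using r
proof (induction rule: rtrancl_induct)
  case base then show ?case using a qq_refl by auto
next
  case (step y z)
  obtain w w' where w: "w \<in> {1..2*n}" "w' \<in> {1..2*n}" "y = fst (c w)" "z = fst (c w')" "qq c w w'"
    using rel_qq[OF c step(2)] by blast
  have "z \<in> Occ n c" using w Occ_iff[OF c] by blast
  moreover have "qq c (line a) (line z)"
    using step(3) qq_trans line_E[OF c w(1)] line_E[OF c w(2)] w by metis
  ultimately show ?case by blast
qed

lemma rel_bwd:
  assumes c: "c \<in> Conf n"
  shows "w \<in> {1..2*n} \<Longrightarrow> w + d \<in> {1..2*n} \<Longrightarrow> qq c w (w+d) \<Longrightarrow>
    (fst (c w), fst (c (w+d))) \<in> (rel n c)\<^sup>* \<and> (fst (c (w+d)), fst (c w)) \<in> (rel n c)\<^sup>*"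
proof (induction d)
  case 0 then show ?case by simp
next
  case (Suc d)
  have q: "qq c w (w+d)" using Suc.prems(3) unfolding qq_def by auto
  have l: "lnk c (w+d)" using Suc.prems(3) unfolding qq_def by auto
  have wd: "w + d \<in> {1..2*n}" using Suc.prems by auto
  have sh: "share (fst (c (w+d))) (fst (c (w + Suc d)))"
    using share_iff[OF c wd Suc.prems(2)] l by simp
  then have "(fst (c (w+d)), fst (c (w + Suc d))) \<in> rel n c" "(fst (c (w + Suc d)), fst (c (w+d))) \<in> rel n c"
    using wd Suc.prems(2) Occ_iff[OF c] share_sym unfolding rel_def by blast+
  then show ?case using Suc.IH[OF Suc.prems(1) wd q]
    by (meson rtrancl_into_rtrancl converse_rtrancl_into_rtrancl)
qed

lemma rel_iff:
  assumes c: "c \<in> Conf n" and w: "w \<in> {1..2*n}" "w' \<in> {1..2*n}"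
  shows "(fst (c w), fst (c w')) \<in> (rel n c)\<^sup>* \<longleftrightarrow> qq c w w'"
proof
  assume "(fst (c w), fst (c w')) \<in> (rel n c)\<^sup>*"
  then show "qq c w w'" using rel_fwd[OF c] Occ_iff[OF c] w line_E[OF c] by metis
next
  assume q: "qq c w w'"
  show "(fst (c w), fst (c w')) \<in> (rel n c)\<^sup>*"
  proof (cases "w \<le> w'")
    case True
    then obtain d where "w' = w + d" using le_Suc_ex by blast
    then show ?thesis using rel_bwd[OF c] w q by blast
  next
    case False
    then obtain d where "w = w' + d" using le_Suc_ex nat_le_linear by (metis)
    then show ?thesis using rel_bwd[OF c, of w' d] w q qq_sym by blast
  qed
qed


definition Starts :: "nat \<Rightarrow> conf \<Rightarrow> nat set" where
  "Starts n c = {w\<in>{1..2*n}. w = 1 \<or> \<not> lnk c (w - 1)}"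

lemma card_Starts:
  assumes n: "n \<ge> 1"
  shows "card (Starts n c) = Suc (card (brk n c))"
proof -
  have "Starts n c = insert 1 (Suc ` brk n c)"
  proof (intro equalityI subsetI)
    fix w assume w: "w \<in> Starts n c"
    show "w \<in> insert 1 (Suc ` brk n c)"
    proof (cases "w = 1")
      case False
      then have "w - 1 \<in> brk n c" "w = Suc (w - 1)" using w unfolding Starts_def brk_def by auto
      then show ?thesis by blast
    qed simp
  next
    fix w assume "w \<in> insert 1 (Suc ` brk n c)"
    then show "w \<in> Starts n c" using n unfolding Starts_def brk_def by auto
  qed
  moreover have "1 \<notin> Suc ` brk n c" unfolding brk_def by auto
  moreover have "finite (brk n c)" unfolding brk_def by auto
  ultimately show ?thesis by (simp add: card_image)
qed

lemma class_eq:
  assumes "(a, b) \<in> R\<^sup>*" "(b, a) \<in> R\<^sup>*"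
  shows "R\<^sup>* `` {a} = R\<^sup>* `` {b}"
  using assms by (auto intro: rtrancl_trans)

lemma ncomp_eq:
  assumes c: "c \<in> Conf n" and n: "n \<ge> 1"
  shows "ncomp n c = Suc (card (brk n c))"
proof -
  let ?R = "(rel n c)\<^sup>*"
  let ?g = "\<lambda>w. ?R `` {fst (c w)}"
  have St: "\<And>w. w \<in> Starts n c \<Longrightarrow> w \<in> {1..2*n}" unfolding Starts_def by auto
  have bij: "bij_betw ?g (Starts n c) (Occ n c // ?R)"
    unfolding bij_betw_def
  proof
    show "inj_on ?g (Starts n c)"
    proof (rule inj_onI, rule ccontr)
      fix s s' assume s: "s \<in> Starts n c" "s' \<in> Starts n c" and eq: "?g s = ?g s'" and ne: "s \<noteq> s'"
      have "fst (c s') \<in> ?g s'" by simp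
      then have "fst (c s') \<in> ?g s" using eq by simp
      then have "(fst (c s), fst (c s')) \<in> ?R" by simp
      then have q: "qq c s s'" using rel_iff[OF c St[OF s(1)] St[OF s(2)]] by simp
      show False
      proof (cases "s < s'")
        case True
        then have "\<not> lnk c (s' - 1)" using s(2) St[OF s(1)] unfolding Starts_def by auto
        moreover have "lnk c (s' - 1)" using q True unfolding qq_def by auto
        ultimately show False by simp
      next
        case False
        then have lt: "s' < s" using ne by simp
        then have "\<not> lnk c (s - 1)" using s(1) St[OF s(2)] unfolding Starts_def by auto
        moreover have "lnk c (s - 1)" using q lt unfolding qq_def by auto
        ultimately show False by simp
      qed
    qed
  next
    show "?g ` Starts n c = Occ n c // ?R"
    proof (intro equalityI subsetI)
      fix X assume "X \<in> ?g ` Starts n c"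
      then obtain w where w: "w \<in> Starts n c" "X = ?g w" by blast
      then have "fst (c w) \<in> Occ n c" using Occ_iff[OF c] St by blast
      then show "X \<in> Occ n c // ?R" using w by (auto intro: quotientI)
    next
      fix X assume "X \<in> Occ n c // ?R"
      then obtain x where x: "x \<in> Occ n c" "X = ?R `` {x}" by (auto elim: quotientE)
      then obtain w where w: "w \<in> {1..2*n}" "x = fst (c w)" using Occ_iff[OF c] by blast
      let ?A = "{s\<in>Starts n c. s \<le> w}"
      have finA: "finite ?A" unfolding Starts_def by auto
      have "1 \<in> ?A" using w n unfolding Starts_def by auto
      then have neA: "?A \<noteq> {}" by blast
      let ?s = "Max ?A"
      have sA: "?s \<in> ?A" using Max_in[OF finA neA] .
      have "qq c ?s w"
        unfolding qq_def
      proof (intro allI impI, rule ccontr)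
        fix k assume k: "min ?s w \<le> k \<and> k < max ?s w" and nl: "\<not> lnk c k"
        have "?s \<le> w" using sA by simp
        then have k2: "?s \<le> k" "k < w" using k by auto
        then have "Suc k \<in> ?A" using nl w unfolding Starts_def by auto
        then have "Suc k \<le> ?s" using Max_ge[OF finA] by blast
        then show False using k2 by simp
      qed
      then have "(fst (c ?s), x) \<in> ?R" "(x, fst (c ?s)) \<in> ?R"
        using rel_iff[OF c, of ?s w] rel_iff[OF c, of w ?s] St sA w qq_sym by auto
      then have "X = ?g ?s" using x class_eq by metis
      then show "X \<in> ?g ` Starts n c" using sA by blast
    qed
  qed
  have "ncomp n c = card (Occ n c // ?R)" unfolding ncomp_def rel_def by simp
  also have "\<dots> = card (Starts n c)" using bij_betw_same_card[OF bij] by simp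
  finally show ?thesis using card_Starts[OF n] by simp
qed


lemma card_Suc_filter:
  "card {k\<in>{1..Suc s}. P k} = card {k\<in>{1..s}. P k} + (if P (Suc s) then 1 else 0)"
proof -
  have "{k\<in>{1..Suc s}. P k} = (if P (Suc s) then insert (Suc s) {k\<in>{1..s}. P k} else {k\<in>{1..s}. P k})"
    by (auto simp: le_Suc_eq)
  then show ?thesis by simp
qed

lemma strvtx_Suc:
  "strvtx z (Suc s) = (fst (strvtx z s) + (if z (Suc s) = 0 then 1 else 0),
                       snd (strvtx z s) + (if z (Suc s) = 1 then 1 else 0))"
  unfolding strvtx_def using card_Suc_filter by simp

lemma strvtx_0: "strvtx z 0 = (0,0)" unfolding strvtx_def by simp

lemma strvtx_sum: "(\<forall>k\<in>{1..s}. z k \<le> 1) \<Longrightarrow> fst (strvtx z s) + snd (strvtx z s) = s"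
proof (induction s)
  case 0 then show ?case by (simp add: strvtx_0)
next
  case (Suc s)
  have "z (Suc s) \<le> 1" using Suc.prems by simp
  then have "z (Suc s) = 0 \<or> z (Suc s) = 1" by auto
  moreover have "fst (strvtx z s) + snd (strvtx z s) = s" using Suc by auto
  ultimately show ?case by (auto simp: strvtx_Suc)
qed

lemma strvtx_mono: "s \<le> t \<Longrightarrow> fst (strvtx z s) \<le> fst (strvtx z t) \<and> snd (strvtx z s) \<le> snd (strvtx z t)"
  unfolding strvtx_def by (auto intro!: card_mono)

lemma edge_eta: "e = (fst (upper e), snd (upper e), snd (snd e))"
  by (cases e) (simp add: upper_def)

lemma lower_eq: "lower e = (fst (upper e) + 1 - snd (snd e), snd (upper e) + snd (snd e))"
  by (cases e) (simp add: upper_def lower_def)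

lemma StrConf_sub:
  assumes "s \<in> StrConf n"
  shows "s \<in> Conf n \<and> brk n s = {}"
proof -
  obtain x z where s: "s = strconf n x z" and xz: "\<forall>k\<in>{1..2*n}. x k \<le> 1 \<and> z k \<le> 1"
    and cz: "card {k\<in>{1..2*n}. z k = 1} = n"
    using assms unfolding StrConf_def by blast
  have tot: "fst (strvtx z (2*n)) + snd (strvtx z (2*n)) = 2*n" using strvtx_sum xz by blast
  have sn: "snd (strvtx z (2*n)) = n" using cz unfolding strvtx_def by simp
  have fn: "fst (strvtx z (2*n)) = n" using tot sn by simp
  have bnd: "\<And>t. t \<le> 2*n \<Longrightarrow> strvtx z t \<in> Vert n"
  proof -
    fix t assume "t \<le> 2*n"
    then have "fst (strvtx z t) \<le> n" "snd (strvtx z t) \<le> n" using strvtx_mono[of t "2*n" z] fn sn by auto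
    then show "strvtx z t \<in> Vert n" by (cases "strvtx z t") (auto simp: Vert_def)
  qed
  have ed: "\<And>w. w \<in> {1..2*n} \<Longrightarrow> stredge z w \<in> Elin n w \<and> lower (stredge z w) = strvtx z w"
  proof -
    fix w assume w: "w \<in> {1..2*n}"
    then obtain t where t: "w = Suc t" by (cases w) auto
    have zw: "z w \<le> 1" using xz w by auto
    have sum: "fst (strvtx z t) + snd (strvtx z t) = t" using strvtx_sum[of t z] xz t w by auto
    have lw: "lower (stredge z w) = strvtx z w"
      using zw unfolding stredge_def lower_def t by (auto simp: strvtx_Suc)
    have "stredge z w \<in> Edges n"
      using bnd[of t] bnd[of w] w t zw lw unfolding Edges_def stredge_def lower_def
      by (auto simp: case_prod_beta)
    moreover have "line (stredge z w) = w" using sum t unfolding line_def stredge_def by simp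
    ultimately show "stredge z w \<in> Elin n w \<and> lower (stredge z w) = strvtx z w"
      using lw unfolding Elin_def by simp
  qed
  have "s \<in> Conf n" unfolding Conf_def s strconf_def using ed xz by auto
  moreover have "brk n s = {}"
  proof -
    have "\<And>k. k \<in> {1..2*n-1} \<Longrightarrow> lnk s k"
    proof -
      fix k assume k: "k \<in> {1..2*n-1}"
      then have "k \<in> {1..2*n}" "Suc k \<in> {1..2*n}" by auto
      then show "lnk s k" unfolding lnk_def s strconf_def
        using ed[of k] by (simp add: stredge_def upper_def)
    qed
    then show ?thesis unfolding brk_def by auto
  qed
  ultimately show ?thesis by blast
qed


lemma upper_line1: "e \<in> Edges n \<Longrightarrow> line e = 1 \<Longrightarrow> upper e = (0,0)"
  by (cases e) (auto simp: line_def upper_def)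

lemma lower_line2n: "e \<in> Edges n \<Longrightarrow> line e = 2*n \<Longrightarrow> lower e = (n,n)"
  using edge_facts[of e n] by (cases "lower e") (auto simp: Vert_def dg_def)

lemma Conf_str:
  assumes c: "c \<in> Conf n" and b: "brk n c = {}" and n: "n \<ge> 1"
  shows "c \<in> StrConf n"
proof -
  define z where "z = (\<lambda>w. snd (snd (fst (c w))))"
  define x where "x = (\<lambda>w. snd (c w))"
  have z1: "\<And>w. w \<in> {1..2*n} \<Longrightarrow> z w \<le> 1"
  proof -
    fix w assume "w \<in> {1..2*n}"
    then have "fst (c w) \<in> Edges n" using conf_facts[OF c] by blast
    then show "z w \<le> 1" unfolding z_def Edges_def by (cases "fst (c w)") auto
  qed
  have lk: "\<And>k. k \<in> {1..2*n-1} \<Longrightarrow> lnk c k" using b unfolding brk_def by auto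
  have lowstep: "\<And>w. w \<in> {1..2*n} \<Longrightarrow> upper (fst (c w)) = strvtx z (w - 1) \<Longrightarrow>
      lower (fst (c w)) = strvtx z w"
  proof -
    fix w assume w: "w \<in> {1..2*n}" and u: "upper (fst (c w)) = strvtx z (w - 1)"
    then obtain t where t: "w = Suc t" by (cases w) auto
    have "z w = 0 \<or> z w = 1" using z1[OF w] by auto
    then show "lower (fst (c w)) = strvtx z w"
      using u lower_eq[of "fst (c w)"] unfolding t by (auto simp: strvtx_Suc z_def)
  qed
  have up: "\<And>w. w \<in> {1..2*n} \<Longrightarrow> upper (fst (c w)) = strvtx z (w - 1)"
  proof -
    fix w show "w \<in> {1..2*n} \<Longrightarrow> upper (fst (c w)) = strvtx z (w - 1)"
    proof (induction w)
      case 0 then show ?case by simp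
    next
      case (Suc w)
      show ?case
      proof (cases "w = 0")
        case True
        then show ?thesis using conf_facts[OF c Suc.prems] upper_line1 strvtx_0 by (metis One_nat_def diff_Suc_1)
      next
        case False
        then have w: "w \<in> {1..2*n}" "w \<in> {1..2*n-1}" using Suc.prems by auto
        have "upper (fst (c (Suc w))) = lower (fst (c w))" using lk[OF w(2)] unfolding lnk_def by simp
        also have "\<dots> = strvtx z w" using lowstep[OF w(1) Suc.IH[OF w(1)]] .
        finally show ?thesis by simp
      qed
    qed
  qed
  have se: "\<And>w. w \<in> {1..2*n} \<Longrightarrow> fst (c w) = stredge z w"
    using up edge_eta unfolding stredge_def z_def by metis
  have n2: "2*n \<in> {1..2*n}" using n by auto
  have "strvtx z (2*n) = (n,n)"
    using lowstep[OF n2 up[OF n2]] lower_line2n conf_facts[OF c n2] by metis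
  then have cz: "card {k\<in>{1..2*n}. z k = 1} = n" unfolding strvtx_def by simp
  have "c = strconf n x z"
  proof
    fix w show "c w = strconf n x z w"
    proof (cases "w \<in> {1..2*n}")
      case True then show ?thesis using se[OF True] unfolding strconf_def x_def by (simp add: prod_eq_iff)
    next
      case False then show ?thesis using conf_out[OF c False] unfolding strconf_def by (simp only: if_False False)
    qed
  qed
  moreover have "\<forall>k\<in>{1..2*n}. x k \<le> 1 \<and> z k \<le> 1" using z1 conf_facts[OF c] unfolding x_def by auto
  ultimately show ?thesis unfolding StrConf_def using cz by blast
qed

lemma StrConf_eq: "n \<ge> 1 \<Longrightarrow> StrConf n = {c\<in>Conf n. brk n c = {}}"
  using StrConf_sub Conf_str by blast


lemma hop_brk:
  assumes h: "hop p a b g d c c' \<noteq> 0"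
  shows "lnk c k = lnk c' k"
proof -
  obtain i j where p: "p = (i,j)" by (cases p)
  let ?w = "i + j + 1"
  have h1: "c' ?w = (pe1 p, a)" "c' (Suc ?w) = (pe2 p, g)" "c ?w = (pe3 p, b)" "c (Suc ?w) = (pe4 p, d)"
    and h2: "\<And>v. v \<noteq> ?w \<Longrightarrow> v \<noteq> Suc ?w \<Longrightarrow> c v = c' v"
    using h unfolding hop_def p Let_def by (auto split: if_splits)
  have "k = i + j \<or> k = ?w \<or> k = Suc ?w \<or> (k \<noteq> ?w \<and> k \<noteq> Suc ?w \<and> Suc k \<noteq> ?w \<and> Suc k \<noteq> Suc ?w)"
    by auto
  then show ?thesis
  proof (elim disjE)
    assume k: "k = i + j"
    then have "c k = c' k" using h2 by simp
    then show ?thesis using h1 k unfolding lnk_def p by (simp add: pe1_def pe3_def upper_def)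
  next
    assume k: "k = ?w"
    show ?thesis using h1 unfolding k lnk_def p by (simp add: pe1_def pe2_def pe3_def pe4_def upper_def lower_def)
  next
    assume k: "k = Suc ?w"
    then have "c (Suc k) = c' (Suc k)" using h2 by simp
    then show ?thesis using h1 k unfolding lnk_def p by (simp add: pe2_def pe4_def lower_def)
  next
    assume "k \<noteq> ?w \<and> k \<noteq> Suc ?w \<and> Suc k \<noteq> ?w \<and> Suc k \<noteq> Suc ?w"
    then show ?thesis using h2 unfolding lnk_def by metis
  qed
qed

lemma hop_D: "hop p a b g d c c' \<noteq> 0 \<Longrightarrow> card (brk n c) = card (brk n c')"
  using hop_brk unfolding brk_def by metis

definition good :: "nat \<Rightarrow> kernel \<Rightarrow> bool" where
  "good n A \<longleftrightarrow> (\<forall>c\<in>Conf n. \<forall>c'\<in>Conf n. card (brk n c) \<noteq> card (brk n c') \<longrightarrow> A c c' = 0)"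

lemma good_commute:
  assumes "good n A"
  shows "commute n (Hstring n) A"
  unfolding commute_def
proof (intro ballI)
  fix c c' assume c: "c \<in> Conf n" and c': "c' \<in> Conf n"
  have 1: "opmul n (Hstring n) A c c' = Hstring n c c * A c c'"
    by (rule opmul_diag[OF _ c]) (simp add: Hstring_off)
  have 2: "opmul n A (Hstring n) c c' = A c c' * Hstring n c' c'"
    by (rule opmul_diag2[OF _ c']) (simp add: Hstring_off)
  show "opmul n (Hstring n) A c c' = opmul n A (Hstring n) c c'"
  proof (cases "card (brk n c) = card (brk n c')")
    case True then show ?thesis using 1 2 Hstring_diag[OF c] Hstring_diag[OF c'] by simp
  next
    case False then show ?thesis using 1 2 assms c c' unfolding good_def by simp
  qed
qed

lemma Hprop_zero:
  assumes "card (brk n c) \<noteq> card (brk n c')"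
  shows "Hprop U p c c' = 0"
proof -
  have "\<And>a b g d. hop p a b g d c c' = 0"
    using hop_D[of p _ _ _ _ c c' n] assms by blast
  moreover have "\<And>a b g d. hop p a b g d c' c = 0"
    using hop_D[of p _ _ _ _ c' c n] assms by metis
  ultimately show ?thesis unfolding Hprop_def Aprop_def by simp
qed

lemma Htot_zero:
  assumes "card (brk n c) \<noteq> card (brk n c')"
  shows "Htot n Us lam c c' = 0"
proof -
  have ne: "c \<noteq> c'" using assms by auto
  have "\<And>e e'. opmul n (Nop e) (Nop e') c c' = 0" by (rule opmul_off[OF _ _ ne]) (auto simp: Nop_off)
  then show ?thesis unfolding Htot_def
    using Hstring_off[OF ne] Hprop_zero[OF assms] Nop_off[OF ne] nop_off[OF ne] by simp
qed

lemma apply_H: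
  assumes c: "c \<in> Conf n"
  shows "apply_op n (Hstring n) \<psi> c = of_nat (2 * card (brk n c)) * \<psi> c"
proof -
  have "(\<Sum>c'\<in>Conf n. Hstring n c c' * \<psi> c') = (\<Sum>c'\<in>Conf n. if c' = c then Hstring n c c * \<psi> c else 0)"
    by (rule sum.cong) (auto simp: Hstring_off)
  then show ?thesis unfolding apply_op_def using c finite_Conf Hstring_diag[OF c] by (simp add: sum.delta')
qed

definition c0 :: "nat \<Rightarrow> conf" where
  "c0 n = (\<lambda>w. if w = 1 then ((0,0,1),0) else if 2 \<le> w \<and> w \<le> n then ((w-1,0,0),0)
      else if n+1 \<le> w \<and> w \<le> 2*n then ((n, w-n-1, 1),0) else dflt)"

lemma c0_Conf: "n \<ge> 1 \<Longrightarrow> c0 n \<in> Conf n"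
  unfolding Conf_def c0_def Elin_def Edges_def Vert_def line_def by auto

lemma c0_brk: "n \<ge> 1 \<Longrightarrow> brk n (c0 n) = {1}"
  unfolding brk_def
proof (intro equalityI subsetI)
  fix k assume n: "n \<ge> 1" and k: "k \<in> {k\<in>{1..2*n-1}. \<not> lnk (c0 n) k}"
  show "k \<in> {1}"
  proof (rule ccontr)
    assume "k \<notin> {1}"
    then have "k \<ge> 2" "k \<le> 2*n-1" "\<not> lnk (c0 n) k" using k by auto
    then consider "Suc k \<le> n" | "k = n" | "n < k" by linarith
    then show False
    proof cases
      case 1 then show False using \<open>\<not> lnk (c0 n) k\<close> \<open>k \<ge> 2\<close> unfolding lnk_def c0_def by (simp add: upper_def lower_def)
    next
      case 2 then show False using \<open>\<not> lnk (c0 n) k\<close> \<open>k \<ge> 2\<close> unfolding lnk_def c0_def by (simp add: upper_def lower_def)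
    next
      case 3
      then have "k \<noteq> 1" "\<not> k \<le> n" "n+1 \<le> k" "k \<le> 2*n" "Suc k \<le> 2*n" "Suc k - n - 1 = k - n"
        using \<open>k \<le> 2*n-1\<close> n by auto
      then show False using \<open>\<not> lnk (c0 n) k\<close> unfolding lnk_def c0_def by (simp add: upper_def lower_def)
    qed
  qed
next
  fix k :: nat assume n: "n \<ge> 1" and "k \<in> {1}"
  then show "k \<in> {k\<in>{1..2*n-1}. \<not> lnk (c0 n) k}"
    unfolding lnk_def c0_def by (auto simp: upper_def lower_def)
qed


lemma finite_StrConf: "n \<ge> 1 \<Longrightarrow> finite (StrConf n)"
  using StrConf_eq finite_Conf by (metis (no_types, lifting) finite_subset mem_Collect_eq subsetI)

lemma Sstring_val: "n \<ge> 1 \<Longrightarrow> (\<Sum>s\<in>StrConf n. a s * ket s c) = (if c \<in> StrConf n then a c else 0)"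
proof -
  assume n: "n \<ge> 1"
  have "(\<Sum>s\<in>StrConf n. a s * ket s c) = (\<Sum>s\<in>StrConf n. if s = c then a c else 0)"
    by (rule sum.cong) (auto simp: ket_def)
  then show ?thesis using finite_StrConf[OF n] by (simp add: sum.delta')
qed

lemma brk_fin: "finite (brk n c)" unfolding brk_def by auto

theorem mainTheorem3:
  fixes n :: nat
  assumes "n \<ge> 1"
  shows "psd n (Hstring n)
    \<and> {\<psi>\<in>Vec n. apply_op n (Hstring n) \<psi> = (\<lambda>_. 0)} = Sstring n
    \<and> is_eigenvalue n (Hstring n) 2
    \<and> (\<forall>\<mu>. is_eigenvalue n (Hstring n) \<mu> \<longrightarrow> \<mu> = 0 \<or> (\<mu> \<in> \<real> \<and> 2 \<le> Re \<mu>))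
    \<and> (\<forall>c\<in>Conf n. apply_op n (Hstring n) (ket c)
            = (\<lambda>c'. (2 * of_nat (ncomp n c) - 2) * ket c c'))
    \<and> (\<forall>e\<in>Edges n. \<forall>\<alpha>\<in>{0,1}. commute n (Hstring n) (nop e \<alpha>))
    \<and> (\<forall>U p. unitary2 U \<and> p \<in> Plaq n \<longrightarrow> commute n (Hstring n) (Hprop U p))
    \<and> (\<forall>Us lam. (\<forall>p\<in>Plaq n. unitary2 (Us p)) \<and> lam \<in> {0..1}
            \<longrightarrow> commute n (Hstring n) (Htot n Us lam))"
proof -
  note n = assms
  let ?H = "Hstring n"
  let ?D = "\<lambda>c. card (brk n c)"
  have P1: "psd n ?H"
    unfolding psd_def
  proof (intro conjI ballI)
    show "hermitian n ?H" unfolding hermitian_def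
    proof (intro ballI)
      fix c c' assume c: "c \<in> Conf n" and "c' \<in> Conf n"
      show "?H c c' = cnj (?H c' c)"
      proof (cases "c = c'")
        case True then show ?thesis using Hstring_diag[OF c] by (simp del: of_nat_mult)
      qed (simp add: Hstring_off)
    qed
  next
    fix \<psi> assume "\<psi> \<in> Vec n"
    let ?q = "\<Sum>c\<in>Conf n. cnj (\<psi> c) * apply_op n ?H \<psi> c"
    have "?q = (\<Sum>c\<in>Conf n. complex_of_real (real (2 * ?D c) * (norm (\<psi> c))\<^sup>2))"
    proof (rule sum.cong)
      fix c assume c: "c \<in> Conf n"
      have "cnj (\<psi> c) * apply_op n ?H \<psi> c = of_nat (2 * ?D c) * (\<psi> c * cnj (\<psi> c))"
        using apply_H[OF c] by (simp add: algebra_simps)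
      also have "\<dots> = complex_of_real (real (2 * ?D c) * (norm (\<psi> c))\<^sup>2)"
        by (simp add: complex_norm_square[symmetric])
      finally show "cnj (\<psi> c) * apply_op n ?H \<psi> c = complex_of_real (real (2 * ?D c) * (norm (\<psi> c))\<^sup>2)" .
    qed simp
    then show "let q = ?q in Im q = 0 \<and> Re q \<ge> 0"
      by (simp add: Let_def sum_nonneg)
  qed
  have P5: "\<forall>c\<in>Conf n. apply_op n ?H (ket c) = (\<lambda>c'. (2 * of_nat (ncomp n c) - 2) * ket c c')"
  proof
    fix c assume c: "c \<in> Conf n"
    show "apply_op n ?H (ket c) = (\<lambda>c'. (2 * of_nat (ncomp n c) - 2) * ket c c')"
    proof
      fix c'
      show "apply_op n ?H (ket c) c' = (2 * of_nat (ncomp n c) - 2) * ket c c'"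
      proof (cases "c' \<in> Conf n")
        case True
        then show ?thesis using apply_H[OF True] ncomp_eq[OF c n] by (auto simp: ket_def)
      next
        case False
        then have "c' \<noteq> c" using c by auto
        then show ?thesis using False by (simp add: apply_op_def ket_def)
      qed
    qed
  qed
  have P2: "{\<psi>\<in>Vec n. apply_op n ?H \<psi> = (\<lambda>_. 0)} = Sstring n"
  proof (intro equalityI subsetI)
    fix \<psi> assume "\<psi> \<in> {\<psi>\<in>Vec n. apply_op n ?H \<psi> = (\<lambda>_. 0)}"
    then have v: "\<psi> \<in> Vec n" and h: "apply_op n ?H \<psi> = (\<lambda>_. 0)" by auto
    have "\<psi> = (\<lambda>c. \<Sum>s\<in>StrConf n. \<psi> s * ket s c)"
    proof
      fix c
      show "\<psi> c = (\<Sum>s\<in>StrConf n. \<psi> s * ket s c)"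
      proof (cases "c \<in> StrConf n")
        case True then show ?thesis using Sstring_val[OF n] by simp
      next
        case False
        have "\<psi> c = 0"
        proof (cases "c \<in> Conf n")
          case True
          then have "brk n c \<noteq> {}" using False StrConf_eq[OF n] by auto
          then have "?D c \<noteq> 0" using brk_fin by auto
          moreover have "of_nat (2 * ?D c) * \<psi> c = 0" using apply_H[OF True, of \<psi>] h by metis
          ultimately show ?thesis by simp
        next
          case False then show ?thesis using v unfolding Vec_def by auto
        qed
        then show ?thesis using Sstring_val[OF n] False by simp
      qed
    qed
    then show "\<psi> \<in> Sstring n" unfolding Sstring_def by blast
  next
    fix \<psi> assume "\<psi> \<in> Sstring n"
    then obtain a where a: "\<psi> = (\<lambda>c. \<Sum>s\<in>StrConf n. a s * ket s c)" unfolding Sstring_def by blast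
    then have pv: "\<And>c. \<psi> c = (if c \<in> StrConf n then a c else 0)" using Sstring_val[OF n] by simp
    have "\<psi> \<in> Vec n" unfolding Vec_def using pv StrConf_eq[OF n] by auto
    moreover have "apply_op n ?H \<psi> = (\<lambda>_. 0)"
    proof
      fix c show "apply_op n ?H \<psi> c = 0"
      proof (cases "c \<in> Conf n")
        case True
        then show ?thesis using apply_H[OF True] pv StrConf_eq[OF n] by auto
      next
        case False then show ?thesis by (simp add: apply_op_def)
      qed
    qed
    ultimately show "\<psi> \<in> {\<psi>\<in>Vec n. apply_op n ?H \<psi> = (\<lambda>_. 0)}" by blast
  qed
  have P3: "is_eigenvalue n ?H 2"
    unfolding is_eigenvalue_def
  proof (intro bexI conjI)
    have c0: "c0 n \<in> Conf n" using c0_Conf[OF n] .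
    show "ket (c0 n) \<in> Vec n" using c0 by (auto simp: Vec_def ket_def)
    show "ket (c0 n) \<noteq> (\<lambda>_. 0)" by (metis ket_def zero_neq_one)
    have "ncomp n (c0 n) = 2" using ncomp_eq[OF c0 n] c0_brk[OF n] by simp
    then show "apply_op n ?H (ket (c0 n)) = (\<lambda>c. 2 * ket (c0 n) c)" using P5 c0 by simp
  qed
  have P4: "\<forall>\<mu>. is_eigenvalue n ?H \<mu> \<longrightarrow> \<mu> = 0 \<or> (\<mu> \<in> \<real> \<and> 2 \<le> Re \<mu>)"
  proof (intro allI impI)
    fix \<mu> assume "is_eigenvalue n ?H \<mu>"
    then obtain \<psi> where v: "\<psi> \<in> Vec n" and nz: "\<psi> \<noteq> (\<lambda>_. 0)" and e: "apply_op n ?H \<psi> = (\<lambda>c. \<mu> * \<psi> c)"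
      unfolding is_eigenvalue_def by blast
    obtain c where pc: "\<psi> c \<noteq> 0" using nz by auto
    then have c: "c \<in> Conf n" using v unfolding Vec_def by auto
    have "of_nat (2 * ?D c) * \<psi> c = \<mu> * \<psi> c" using apply_H[OF c, of \<psi>] e by metis
    then have mu: "\<mu> = of_nat (2 * ?D c)" using pc by simp
    show "\<mu> = 0 \<or> (\<mu> \<in> \<real> \<and> 2 \<le> Re \<mu>)"
    proof (cases "?D c = 0")
      case True then show ?thesis using mu by simp
    next
      case False then show ?thesis using mu by (simp add: Reals_of_nat[unfolded of_nat_mult])
    qed
  qed
  have P6: "\<forall>e\<in>Edges n. \<forall>\<alpha>\<in>{0,1}. commute n ?H (nop e \<alpha>)"
    using good_commute nop_off unfolding good_def by (metis)
  have P7: "\<forall>U p. unitary2 U \<and> p \<in> Plaq n \<longrightarrow> commute n ?H (Hprop U p)"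
    using good_commute Hprop_zero unfolding good_def by (metis)
  have P8: "\<forall>Us lam. (\<forall>p\<in>Plaq n. unitary2 (Us p)) \<and> lam \<in> {0..1}
            \<longrightarrow> commute n ?H (Htot n Us lam)"
    using good_commute Htot_zero unfolding good_def by (metis)
  show ?thesis using P1 P2 P3 P4 P5 P6 P7 P8 by blast
qed

end
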